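(* Fix $i\in[n]$, arbitrary $\mathbf{b}_{-i}^{(1)},\dots,\mathbf{b}_{-i}^{(T)}\in B^{n-1}$, and formats $\mathcal{M}^{(1)},\dots,\mathcal{M}^{(T)}$ all satisfying allocation monotonicity. Suppose bidder $i$ uses $s_{i,\boldsymbol{\pi}^{(t)}}$ at each round $t$, for some quantile strategies $\boldsymbol{\pi}^{(t)}\in\Delta([K+1])$. Then \[ \max_{s\in\mathcal{S}}\sum_{t\in[T]}\big(u_i^{(t)}(s)-u_i^{(t)}(s_{i,\boldsymbol{\pi}^{(t)}})\big)=\max_{\boldsymbol{\pi}\in\Delta([K+1])}\sum_{t\in[T]}\big(q_i^{(t)}(\boldsymbol{\pi})-q_i^{(t)}(\boldsymbol{\pi}^{(t)})\big). \]
   Context: Bidder $i$'s value $v_i\in[0,1]$ is drawn from a continuous distribution $\mathcal{D}_i$ on $[0,1]$ with CDF $F_i$ and quantile function $F_i^{-1}(y):=\inf\{v\in[0,1]:F_i(v)\ge y\}$. The bid set is $B:=\{j/K:j=0,\dots,K\}$; $\mathcal{S}$ is the set of all functions $s:[0,1]\to B$. Auction formats $\mathcal{M}^{(t)}=(\mathbf{x}^{(t)},\mathbf{p}^{(t)})$, $\mathbf{x}^{(t)}:B^n\to\Delta([n])$ (nonnegative entries summing to at most 1), $\mathbf{p}^{(t)}:B^n\to[0,1]^n$. Allocation monotonicity: $x_i^{(t)}(b_i,\mathbf{b}_{-i})\le x_i^{(t)}(b_i',\mathbf{b}_{-i})$ whenever $b_i\le b_i'$. Utility: $u_i^{(t)}(s):=\mathbb{E}_{v_i\sim\mathcal{D}_i}[x_i^{(t)}(s(v_i),\mathbf{b}_{-i}^{(t)})v_i-p_i^{(t)}(s(v_i),\mathbf{b}_{-i}^{(t)})]$.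 Quantile strategies are $\boldsymbol{\pi}\in\Delta([K+1])$ (probability simplex); with $\Pi_0:=0$, $\Pi_j:=\sum_{\ell\le j}\pi_\ell$, the strategy $s_{i,\boldsymbol{\pi}}$ bids $0$ on $[0,F_i^{-1}(\Pi_1)]$ and $\frac{j-1}{K}$ on $(F_i^{-1}(\Pi_{j-1}),F_i^{-1}(\Pi_j)]$ for $j=2,\dots,K+1$. Quantile utility: $q_i^{(t)}(\boldsymbol{\pi}):=u_i^{(t)}(s_{i,\boldsymbol{\pi}})$. *)

theory Defs
  imports "HOL-Probability.Probability" "HOL-Library.FuncSet"
begin

definition bidset :: "nat \<Rightarrow> real set" where
  "bidset K = {real j / real K | j. j \<le> K}"

definition quantile :: "real measure \<Rightarrow> real \<Rightarrow> real" where
  "quantile D y = Inf {v \<in> {0..1}. cdf D v \<ge> y}"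

definition quantile_simplex :: "nat \<Rightarrow> (nat \<Rightarrow> real) set" where
  "quantile_simplex K = {\<pi>. (\<forall>l\<in>{1..K+1}. 0 \<le> \<pi> l) \<and> (\<Sum>l=1..K+1. \<pi> l) = 1}"

definition cumsum :: "(nat \<Rightarrow> real) \<Rightarrow> nat \<Rightarrow> real" where
  "cumsum \<pi> j = (\<Sum>l=1..j. \<pi> l)"

definition qstrat :: "nat \<Rightarrow> real measure \<Rightarrow> (nat \<Rightarrow> real) \<Rightarrow> real \<Rightarrow> real" where
  "qstrat K D \<pi> v =
     (if v \<le> quantile D (cumsum \<pi> 1) then 0
      else (\<Sum>j=2..K+1. (real (j - 1) / real K) *
              indicator {quantile D (cumsum \<pi> (j - 1))<..quantile D (cumsum \<pi> j)} v))"

definition utility ::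
  "real measure \<Rightarrow> ((nat \<Rightarrow> real) \<Rightarrow> nat \<Rightarrow> real) \<Rightarrow> ((nat \<Rightarrow> real) \<Rightarrow> nat \<Rightarrow> real)
    \<Rightarrow> (nat \<Rightarrow> real) \<Rightarrow> nat \<Rightarrow> (real \<Rightarrow> real) \<Rightarrow> real" where
  "utility D x p bo i s =
     (\<integral>v. x (bo(i := s v)) i * v - p (bo(i := s v)) i \<partial>D)"

definition strategies :: "nat \<Rightarrow> (real \<Rightarrow> real) set" where
  "strategies K = {s. s \<in> borel_measurable borel \<and> (\<forall>v. s v \<in> bidset K)}"

definition valid_format ::
  "nat \<Rightarrow> nat \<Rightarrow> ((nat \<Rightarrow> real) \<Rightarrow> nat \<Rightarrow> real) \<Rightarrow> ((nat \<Rightarrow> real) \<Rightarrow> nat \<Rightarrow> real) \<Rightarrow> bool" where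
  "valid_format K n x p \<longleftrightarrow>
     (\<forall>b\<in>{..<n} \<rightarrow>\<^sub>E bidset K.
        (\<forall>k<n. 0 \<le> x b k) \<and> (\<Sum>k<n. x b k) \<le> 1 \<and> (\<forall>k<n. p b k \<in> {0..1}))"

definition alloc_monotone ::
  "nat \<Rightarrow> nat \<Rightarrow> ((nat \<Rightarrow> real) \<Rightarrow> nat \<Rightarrow> real) \<Rightarrow> bool" where
  "alloc_monotone K n x \<longleftrightarrow>
     (\<forall>j<n. \<forall>b\<in>{..<n} \<rightarrow>\<^sub>E bidset K. \<forall>b'\<in>{..<n} \<rightarrow>\<^sub>E bidset K.
        (\<forall>k. k \<noteq> j \<longrightarrow> b k = b' k) \<longrightarrow> b j \<le> b' j \<longrightarrow> x b j \<le> x b' j)"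

end

theory Submission
  imports Defs
begin


lemma cdf_quantile:
  assumes D_dist: "real_distribution D"
    and D_supp: "measure D {0..1} = 1"
    and D_cont: "\<forall>v. isCont (cdf D) v"
    and y: "0 \<le> y" "y \<le> 1"
  shows "cdf D (quantile D y) = y"
proof -
  interpret real_distribution D by (rule D_dist)
  have F1: "cdf D 1 = 1"
  proof -
    have "measure D {0..1} \<le> measure D {..1}" by (intro finite_measure_mono) auto
    then show ?thesis using D_supp cdf_bounded_prob[of 1] unfolding cdf_def by simp
  qed
  have F0: "cdf D 0 = 0"
  proof -
    have "{..(0::real)} \<subseteq> (UNIV - {0..1}) \<union> {0}" by auto
    then have "measure D {..0} \<le> measure D ((UNIV - {0..1}) \<union> {0})"
      by (intro finite_measure_mono) auto
    also have "\<dots> \<le> measure D (UNIV - {0..1}) + measure D {0}"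
      by (intro measure_Un_le) auto
    also have "measure D (UNIV - {0..1}) = 0"
      using prob_compl[of "{0..1}"] D_supp by simp
    also have "measure D {0} = 0" using D_cont isCont_cdf by blast
    finally show ?thesis using cdf_nonneg[of 0] unfolding cdf_def by simp
  qed
  define S where "S = {v \<in> {0..1}. y \<le> cdf D v}"
  have Sne: "1 \<in> S" using F1 y unfolding S_def by auto
  have Sbdd: "bdd_below S" unfolding S_def by (rule bdd_belowI[of _ 0]) auto
  have "continuous_on UNIV (cdf D)" using D_cont continuous_at_imp_continuous_on by blast
  then have "closed {v. y \<le> cdf D v}" using closed_Collect_le[OF continuous_on_const] by blast
  moreover have "S = {0..1} \<inter> {v. y \<le> cdf D v}" unfolding S_def by auto
  ultimately have Scl: "closed S" by (simp add: closed_Int)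
  have q: "quantile D y = Inf S" unfolding quantile_def S_def by (simp add: conj_commute)
  have qS: "Inf S \<in> S" using closed_contains_Inf[OF _ Sbdd Scl] Sne by blast
  then have ge: "y \<le> cdf D (Inf S)" unfolding S_def by auto
  have le: "cdf D (Inf S) \<le> y"
  proof (rule ccontr)
    assume c: "\<not> ?thesis"
    have "Inf S \<ge> 0" using qS unfolding S_def by auto
    moreover have "Inf S \<noteq> 0" using c F0 y by auto
    ultimately have qpos: "Inf S > 0" by simp
    have lim: "(cdf D \<longlongrightarrow> cdf D (Inf S)) (at_left (Inf S))"
    proof -
      have "(cdf D \<longlongrightarrow> cdf D (Inf S)) (at (Inf S))" using D_cont unfolding isCont_def by blast
      then show ?thesis by (rule filterlim_at_split[THEN iffD1, THEN conjunct1])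
    qed
    have ev: "eventually (\<lambda>w. cdf D w \<le> y) (at_left (Inf S))"
    proof -
      have "eventually (\<lambda>w. w \<in> {0<..<Inf S}) (at_left (Inf S))"
        using qpos by (rule eventually_at_left_real)
      then show ?thesis
      proof (rule eventually_mono)
        fix w assume w: "w \<in> {0<..<Inf S}"
        have "Inf S \<le> 1" using qS unfolding S_def by simp
        then have w1: "w \<in> {0..1}" using w by simp
        have "w \<notin> S"
        proof
          assume "w \<in> S"
          then have "Inf S \<le> w" by (rule cInf_lower[OF _ Sbdd])
          then show False using w by simp
        qed
        then show "cdf D w \<le> y" using w1 unfolding S_def by simp
      qed
    qed
    have "cdf D (Inf S) \<le> y"
      by (rule tendsto_upperbound[OF lim ev]) simp
    then show False using c by simp
  qed
  show ?thesis using q ge le by simp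
qed



definition Eexp :: "nat \<Rightarrow> (nat \<Rightarrow> real) \<Rightarrow> real \<Rightarrow> real" where
  "Eexp K a v = (if v \<le> a 1 then 0 else
     (\<Sum>j=2..K+1. (real (j - 1) / real K) * indicator {a (j - 1)<..a j} v))"

lemma qstrat_Eexp: "qstrat K D \<pi> = Eexp K (\<lambda>j. quantile D (cumsum \<pi> j))"
  by (simp add: qstrat_def Eexp_def fun_eq_iff)

lemma in_bidset: "k \<le> K \<Longrightarrow> real k / real K \<in> bidset K"
  unfolding bidset_def by blast

lemma finite_bidset: "finite (bidset K)"
proof -
  have "bidset K = (\<lambda>j. real j / real K) ` {..K}" unfolding bidset_def by auto
  then show ?thesis by simp
qed

lemma E_val:
  assumes k: "k \<le> K" and h: "\<forall>j\<in>{1..K+1}. (v \<le> a j \<longleftrightarrow> k + 1 \<le> j)"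
  shows "Eexp K a v = real k / real K"
proof -
  have h': "\<And>j. j \<in> {1..K+1} \<Longrightarrow> (v \<le> a j \<longleftrightarrow> k + 1 \<le> j)" using h by blast
  show ?thesis
proof (cases "k = 0")
  case True
  then have "v \<le> a 1" using h'[of 1] by simp
  then show ?thesis using True by (simp add: Eexp_def)
next
  case False
  then have nv: "\<not> v \<le> a 1" using h'[of 1] by simp
  have hall: "\<forall>j\<in>{2..K+1}. (real (j - 1) / real K) * indicator {a (j - 1)<..a j} v
        = (if j = k + 1 then real k / real K else 0)"
  proof
    fix j assume j: "j \<in> {2..K+1}"
    then have j1: "j - 1 \<in> {1..K+1}" by auto
    have e1: "v \<le> a (j - 1) \<longleftrightarrow> k + 1 \<le> j - 1" using h'[OF j1] .
    have j2: "j \<in> {1..K+1}" using j by simp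
    have e2: "v \<le> a j \<longleftrightarrow> k + 1 \<le> j" using h'[OF j2] .
    have "v \<in> {a (j - 1)<..a j} \<longleftrightarrow> j = k + 1" using e1 e2 j by auto
    then show "(real (j - 1) / real K) * indicator {a (j - 1)<..a j} v
        = (if j = k + 1 then real k / real K else 0)"
      by (auto simp: indicator_def)
  qed
  have "(\<Sum>j=2..K+1. (real (j - 1) / real K) * indicator {a (j - 1)<..a j} v)
      = (\<Sum>j=2..K+1. (if j = k + 1 then real k / real K else 0))"
    by (rule sum.cong[OF refl]) (use hall in blast)
  also have "\<dots> = (if k + 1 \<in> {2..K+1} then real k / real K else 0)"
    by (rule sum.delta) simp
  also have "\<dots> = real k / real K" using k False by simp
  finally have "(\<Sum>j=2..K+1. (real (j - 1) / real K) * indicator {a (j - 1)<..a j} v) = real k / real K" .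
  then show ?thesis using nv unfolding Eexp_def by (simp only: if_False)
qed
qed

lemma E_in:
  assumes mono: "\<forall>l m. 1 \<le> l \<longrightarrow> l \<le> m \<longrightarrow> m \<le> K+1 \<longrightarrow> a l \<le> a m"
  shows "Eexp K a v \<in> bidset K"
proof (cases "\<exists>j\<in>{1..K+1}. v \<le> a j")
  case True
  define j0 where "j0 = (LEAST j. j \<in> {1..K+1} \<and> v \<le> a j)"
  have j0: "j0 \<in> {1..K+1} \<and> v \<le> a j0"
    unfolding j0_def by (rule LeastI_ex) (use True in blast)
  have j0le: "\<And>j. j \<in> {1..K+1} \<Longrightarrow> v \<le> a j \<Longrightarrow> j0 \<le> j"
    unfolding j0_def by (simp add: Least_le)
  have h: "\<forall>j\<in>{1..K+1}. (v \<le> a j \<longleftrightarrow> (j0 - 1) + 1 \<le> j)"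
  proof
    fix j assume j: "j \<in> {1..K+1}"
    show "v \<le> a j \<longleftrightarrow> (j0 - 1) + 1 \<le> j"
    proof
      assume "v \<le> a j" then show "(j0 - 1) + 1 \<le> j" using j0le[OF j] j0 by simp
    next
      assume "(j0 - 1) + 1 \<le> j"
      then have "j0 \<le> j" using j0 by simp
      moreover have "1 \<le> j0" using j0 by simp
      moreover have "j \<le> K + 1" using j by simp
      ultimately have "a j0 \<le> a j" using mono by blast
      then show "v \<le> a j" using j0 by simp
    qed
  qed
  have "j0 - 1 \<le> K" using j0 by auto
  then show ?thesis using E_val[OF _ h] in_bidset[of "j0 - 1" K] by simp
next
  case False
  then have "\<not> v \<le> a 1" by auto
  moreover have "\<forall>j\<in>{2..K+1}. indicator {a (j - 1)<..a j} v = (0::real)"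
    using False by (auto simp: indicator_def)
  moreover have "(\<Sum>j=2..K+1. (real (j - 1) / real K) * indicator {a (j - 1)<..a j} v) = 0"
    by (rule sum.neutral) (use calculation(2) in simp)
  ultimately have "Eexp K a v = 0" unfolding Eexp_def by (simp only: if_False)
  then show ?thesis using in_bidset[of 0 K] by simp
qed


lemma meas_comp:
  fixes s :: "real \<Rightarrow> real" and g :: "real \<Rightarrow> real \<Rightarrow> real"
  assumes sm: "s \<in> borel_measurable borel" and sB: "\<forall>v. s v \<in> Bs" and fin: "finite Bs"
    and gm: "\<And>b. g b \<in> borel_measurable borel"
  shows "(\<lambda>v. g (s v) v) \<in> borel_measurable borel"
proof -
  have eq: "(\<lambda>v. g (s v) v) = (\<lambda>v. \<Sum>b\<in>Bs. indicator (s -` {b}) v * g b v)"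
  proof
    fix v
    have "(\<Sum>b\<in>Bs. indicator (s -` {b}) v * g b v) = (\<Sum>b\<in>Bs. (if s v = b then g (s v) v else 0))"
      by (rule sum.cong) (auto simp: indicator_def)
    also have "\<dots> = g (s v) v" using sB fin by (simp add: sum.delta')
    finally show "g (s v) v = (\<Sum>b\<in>Bs. indicator (s -` {b}) v * g b v)" by simp
  qed
  have pre: "\<And>b. s -` {b} \<in> sets borel"
  proof -
    fix b
    have "s -` {b} \<inter> space borel \<in> sets borel" by (rule measurable_sets[OF sm]) simp
    then show "s -` {b} \<in> sets borel" by simp
  qed
  show ?thesis unfolding eq
    by (intro borel_measurable_sum borel_measurable_times borel_measurable_indicator pre gm)
qed


lemma AE_eq_nested:
  assumes "finite_measure M" "X \<in> sets M" "Y \<in> sets M" "X \<subseteq> Y" "measure M X = measure M Y"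
  shows "AE v in M. (v \<in> X \<longleftrightarrow> v \<in> Y)"
proof -
  interpret finite_measure M by fact
  have "measure M (Y - X) = 0" using finite_measure_Diff[OF assms(3,2,4)] assms(5) by simp
  then have e: "emeasure M (Y - X) = 0" by (simp add: emeasure_eq_measure)
  have YX: "Y - X \<in> sets M" using assms(2,3) by blast
  have sp: "Y \<subseteq> space M" using assms(3) by (rule sets.sets_into_space)
  have "{x \<in> space M. \<not> (x \<in> X \<longleftrightarrow> x \<in> Y)} = Y - X"
    using assms(4) sp by auto
  from AE_iff_measurable[OF YX this] e show ?thesis by simp
qed

lemma qstrat_meas: "qstrat K D \<pi> \<in> borel_measurable borel"
proof -
  have eq: "qstrat K D \<pi> = (\<lambda>v. if v \<in> {..quantile D (cumsum \<pi> 1)} then 0 else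
     (\<Sum>j=2..K+1. (real (j - 1) / real K) *
              indicator {quantile D (cumsum \<pi> (j - 1))<..quantile D (cumsum \<pi> j)} v))"
    unfolding qstrat_def by (simp add: fun_eq_iff)
  show ?thesis unfolding eq
    by (intro measurable_If_set borel_measurable_sum borel_measurable_times borel_measurable_indicator
        borel_measurable_const) auto
qed


lemma cdf_one:
  assumes D_dist: "real_distribution D" and D_supp: "measure D {0..1} = 1"
  shows "cdf D 1 = 1"
proof -
  interpret real_distribution D by (rule D_dist)
  have "measure D {0..1} \<le> measure D {..1}" by (intro finite_measure_mono) auto
  then show ?thesis using D_supp cdf_bounded_prob[of 1] unfolding cdf_def by simp
qed

lemma quantile_mono:
  assumes D_dist: "real_distribution D" and D_supp: "measure D {0..1} = 1"
    and yy: "y \<le> y'" "y' \<le> 1"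
  shows "quantile D y \<le> quantile D y'"
proof -
  have "1 \<in> {v \<in> {0..1}. cdf D v \<ge> y'}" using cdf_one[OF D_dist D_supp] yy by simp
  then have ne: "{v \<in> {0..1}. cdf D v \<ge> y'} \<noteq> {}" by blast
  have bd: "bdd_below {v \<in> {0..1}. cdf D v \<ge> y}" by (rule bdd_belowI[of _ 0]) auto
  have sub: "{v \<in> {0..1}. cdf D v \<ge> y'} \<subseteq> {v \<in> {0..1}. cdf D v \<ge> y}" using yy by auto
  show ?thesis unfolding quantile_def by (rule cInf_superset_mono[OF ne bd sub])
qed


theorem mainTheorem4:
  fixes n K T i :: nat
    and D :: "real measure"
    and x p :: "nat \<Rightarrow> (nat \<Rightarrow> real) \<Rightarrow> nat \<Rightarrow> real"
    and bo :: "nat \<Rightarrow> nat \<Rightarrow> real"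
    and \<pi>t :: "nat \<Rightarrow> nat \<Rightarrow> real"
  assumes K_pos: "0 < K"
    and i_lt: "i < n"
    and D_dist: "real_distribution D"
    and D_supp: "measure D {0..1} = 1"
    and D_cont: "\<forall>v. isCont (cdf D) v"
    and formats: "\<forall>t\<in>{1..T}. valid_format K n (x t) (p t) \<and> alloc_monotone K n (x t)"
    and others: "\<forall>t\<in>{1..T}. bo t \<in> ({..<n} - {i}) \<rightarrow>\<^sub>E bidset K"
    and played: "\<forall>t\<in>{1..T}. \<pi>t t \<in> quantile_simplex K"
  shows "\<exists>m.
     ((\<exists>s\<in>strategies K.
         (\<Sum>t=1..T. utility D (x t) (p t) (bo t) i s
                     - utility D (x t) (p t) (bo t) i (qstrat K D (\<pi>t t))) = m) \<and>
      (\<forall>s\<in>strategies K.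
         (\<Sum>t=1..T. utility D (x t) (p t) (bo t) i s
                     - utility D (x t) (p t) (bo t) i (qstrat K D (\<pi>t t))) \<le> m)) \<and>
     ((\<exists>\<pi>\<in>quantile_simplex K.
         (\<Sum>t=1..T. utility D (x t) (p t) (bo t) i (qstrat K D \<pi>)
                     - utility D (x t) (p t) (bo t) i (qstrat K D (\<pi>t t))) = m) \<and>
      (\<forall>\<pi>\<in>quantile_simplex K.
         (\<Sum>t=1..T. utility D (x t) (p t) (bo t) i (qstrat K D \<pi>)
                     - utility D (x t) (p t) (bo t) i (qstrat K D (\<pi>t t))) \<le> m))"
proof -
  interpret real_distribution D by (rule D_dist)
  define B where "B = bidset K"
  have finB: "finite B" unfolding B_def by (rule finite_bidset)
  have Bchar: "\<And>b. b \<in> B \<Longrightarrow> \<exists>j\<le>K. b = real j / real K" unfolding B_def bidset_def by blast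
  define prof where "prof t b = (bo t)(i := b)" for t b
  define f where "f t b v = x t (prof t b) i * v - p t (prof t b) i" for t b v
  define G where "G b v = (\<Sum>t=1..T. f t b v)" for b v
  define U where "U t s = utility D (x t) (p t) (bo t) i s" for t s
  have Udef: "\<And>t s. utility D (x t) (p t) (bo t) i s = U t s" by (simp add: U_def)
  have Ueq: "\<And>t s. U t s = (\<integral>v. f t (s v) v \<partial>D)" unfolding U_def utility_def f_def prof_def by simp
  have prof_in: "\<And>t b. t \<in> {1..T} \<Longrightarrow> b \<in> B \<Longrightarrow> prof t b \<in> {..<n} \<rightarrow>\<^sub>E bidset K"
  proof -
    fix t b assume t: "t \<in> {1..T}" and b: "b \<in> B"
    have bo: "bo t \<in> ({..<n} - {i}) \<rightarrow>\<^sub>E bidset K" using others t by blast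
    show "prof t b \<in> {..<n} \<rightarrow>\<^sub>E bidset K"
      using bo b i_lt unfolding prof_def B_def PiE_iff extensional_def by auto
  qed
  have xb: "\<And>t b. t \<in> {1..T} \<Longrightarrow> b \<in> B \<Longrightarrow> 0 \<le> x t (prof t b) i \<and> x t (prof t b) i \<le> 1
      \<and> 0 \<le> p t (prof t b) i \<and> p t (prof t b) i \<le> 1"
  proof -
    fix t b assume t: "t \<in> {1..T}" and b: "b \<in> B"
    have vf: "valid_format K n (x t) (p t)" using formats t by blast
    have H: "(\<forall>k<n. 0 \<le> x t (prof t b) k) \<and> (\<Sum>k<n. x t (prof t b) k) \<le> 1
        \<and> (\<forall>k<n. p t (prof t b) k \<in> {0..1})"
      using bspec[OF vf[unfolded valid_format_def] prof_in[OF t b]] .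
    have "x t (prof t b) i \<le> (\<Sum>k<n. x t (prof t b) k)"
      by (rule member_le_sum) (use H i_lt in auto)
    then show "0 \<le> x t (prof t b) i \<and> x t (prof t b) i \<le> 1
      \<and> 0 \<le> p t (prof t b) i \<and> p t (prof t b) i \<le> 1" using H i_lt by auto
  qed
  have xmono: "\<And>t b b'. t \<in> {1..T} \<Longrightarrow> b \<in> B \<Longrightarrow> b' \<in> B \<Longrightarrow> b \<le> b'
      \<Longrightarrow> x t (prof t b) i \<le> x t (prof t b') i"
  proof -
    fix t b b' assume t: "t \<in> {1..T}" and b: "b \<in> B" and b': "b' \<in> B" and le: "b \<le> b'"
    have am: "alloc_monotone K n (x t)" using formats t by blast
    have H: "\<forall>j<n. \<forall>bb\<in>{..<n} \<rightarrow>\<^sub>E bidset K. \<forall>bb'\<in>{..<n} \<rightarrow>\<^sub>E bidset K.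
        (\<forall>k. k \<noteq> j \<longrightarrow> bb k = bb' k) \<longrightarrow> bb j \<le> bb' j \<longrightarrow> x t bb j \<le> x t bb' j"
      using am unfolding alloc_monotone_def .
    show "x t (prof t b) i \<le> x t (prof t b') i"
      by (rule H[rule_format, OF i_lt prof_in[OF t b] prof_in[OF t b']]) (simp_all add: prof_def le)
  qed
  define A where "A b = (\<Sum>t=1..T. x t (prof t b) i)" for b
  define Pp where "Pp b = (\<Sum>t=1..T. p t (prof t b) i)" for b
  have Glin: "\<And>b v. G b v = A b * v - Pp b"
    unfolding G_def f_def A_def Pp_def by (simp add: sum_subtractf sum_distrib_right)
  have Amono: "\<And>b b'. b \<in> B \<Longrightarrow> b' \<in> B \<Longrightarrow> b \<le> b' \<Longrightarrow> A b \<le> A b'"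
    unfolding A_def by (intro sum_mono xmono)
  define P where "P v k = (k \<le> K \<and> (\<forall>l\<le>K. G (real l / real K) v \<le> G (real k / real K) v))" for v k
  have exmax: "\<And>v. \<exists>k. P v k"
  proof -
    fix v
    let ?S = "(\<lambda>l. G (real l / real K) v) ` {..K}"
    have fin: "finite ?S" by simp
    have ne: "?S \<noteq> {}" by simp
    have "Max ?S \<in> ?S" by (rule Max_in[OF fin ne])
    then obtain k where k: "k \<in> {..K}" "Max ?S = G (real k / real K) v" by blast
    have "\<forall>l\<le>K. G (real l / real K) v \<le> Max ?S" using Max_ge[OF fin] by simp
    then have "P v k" unfolding P_def using k by simp
    then show "\<exists>k. P v k" by blast
  qed
  define ks where "ks v = Greatest (P v)" for v
  have ks: "\<And>v. P v (ks v)"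
  proof -
    fix v
    obtain k where k: "P v k" using exmax by blast
    show "P v (ks v)" unfolding ks_def by (rule GreatestI_nat[where P="P v" and k=k and b=K, OF k]) (simp add: P_def)
  qed
  have ksK: "\<And>v. ks v \<le> K" using ks unfolding P_def by blast
  have ks_gr: "\<And>v k. P v k \<Longrightarrow> k \<le> ks v"
  proof -
    fix v k assume Pk: "P v k"
    show "k \<le> ks v" unfolding ks_def by (rule Greatest_le_nat[where P="P v" and b=K, OF Pk]) (simp add: P_def)
  qed
  have ks_mono: "\<And>v w. v \<le> w \<Longrightarrow> ks v \<le> ks w"
  proof (rule ccontr)
    fix v w :: real assume vw: "v \<le> w" and c: "\<not> ks v \<le> ks w"
    define a where "a = real (ks v) / real K"
    define cc where "cc = real (ks w) / real K"
    have aB: "a \<in> B" unfolding B_def a_def by (rule in_bidset[OF ksK])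
    have cB: "cc \<in> B" unfolding B_def cc_def by (rule in_bidset[OF ksK])
    have ca: "cc \<le> a" unfolding a_def cc_def using c by (intro divide_right_mono) auto
    have h1: "G cc v \<le> G a v" using ks[of v] ksK[of w] unfolding P_def a_def cc_def by blast
    have "\<not> P w (ks v)" using ks_gr[of w "ks v"] c by auto
    then obtain l where l: "l \<le> K" "\<not> G (real l / real K) w \<le> G a w"
      using ksK[of v] unfolding P_def a_def by blast
    moreover have "G (real l / real K) w \<le> G cc w" using ks[of w] l(1) unfolding P_def cc_def by blast
    ultimately have h2: "G a w < G cc w" by simp
    have Aac: "A cc \<le> A a" using Amono[OF cB aB ca] .
    have "0 \<le> (A a - A cc) * (w - v)" using Aac vw by simp
    then have "0 \<le> A a * w - A a * v - A cc * w + A cc * v" by (simp add: algebra_simps)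
    then show False using h1 h2 unfolding Glin by linarith
  qed
  define ss where "ss v = real (ks v) / real K" for v
  have ssB: "\<And>v. ss v \<in> B" unfolding ss_def B_def by (rule in_bidset[OF ksK])
  have ss_mono: "mono ss" unfolding mono_def ss_def
    using ks_mono by (auto intro: divide_right_mono)
  have ss_meas: "ss \<in> borel_measurable borel" by (rule borel_measurable_mono[OF ss_mono])
  have ss_opt: "\<And>b v. b \<in> B \<Longrightarrow> G b v \<le> G (ss v) v"
  proof -
    fix b v assume "b \<in> B"
    then obtain j where j: "j \<le> K" "b = real j / real K" using Bchar by blast
    show "G b v \<le> G (ss v) v" using ks[of v] j unfolding P_def ss_def by blast
  qed
  have AE01: "AE v in D. v \<in> {0..1}" using AE_in_set_eq_1[of "{0..1}"] D_supp by simp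
  have measD: "borel_measurable D = borel_measurable borel" by (rule measurable_cong_sets) simp_all
  have fmeas: "\<And>t b. f t b \<in> borel_measurable borel" unfolding f_def by measurable
  have fbound: "\<And>t b v. t \<in> {1..T} \<Longrightarrow> b \<in> B \<Longrightarrow> v \<in> {0..1} \<Longrightarrow> norm (f t b v) \<le> 2"
  proof -
    fix t b and v :: real assume t: "t \<in> {1..T}" and b: "b \<in> B" and v: "v \<in> {0..1}"
    have X: "0 \<le> x t (prof t b) i" "x t (prof t b) i \<le> 1" "0 \<le> p t (prof t b) i" "p t (prof t b) i \<le> 1"
      using xb[OF t b] by auto
    have "0 \<le> x t (prof t b) i * v" using X v by simp
    moreover have "x t (prof t b) i * v \<le> 1" using X v by (intro mult_le_one) auto
    ultimately show "norm (f t b v) \<le> 2" unfolding f_def using X by simp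
  qed
  have integ: "\<And>t (s :: real \<Rightarrow> real). t \<in> {1..T} \<Longrightarrow> s \<in> borel_measurable borel \<Longrightarrow> (\<forall>v. s v \<in> B)
      \<Longrightarrow> integrable D (\<lambda>v. f t (s v) v)"
  proof -
    fix t and s :: "real \<Rightarrow> real" assume t: "t \<in> {1..T}" and sm: "s \<in> borel_measurable borel" and sB: "\<forall>v. s v \<in> B"
    have m: "(\<lambda>v. f t (s v) v) \<in> borel_measurable D"
      unfolding measD by (rule meas_comp[OF sm sB finB fmeas])
    have "AE v in D. norm (f t (s v) v) \<le> 2"
      using AE01 by (rule eventually_mono) (use fbound[OF t] sB in blast)
    then show "integrable D (\<lambda>v. f t (s v) v)" by (rule integrable_const_bound[OF _ m])
  qed
  have sumU: "\<And>s :: real \<Rightarrow> real. s \<in> borel_measurable borel \<Longrightarrow> (\<forall>v. s v \<in> B)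
      \<Longrightarrow> (\<Sum>t=1..T. U t s) = (\<integral>v. G (s v) v \<partial>D)"
    unfolding Ueq G_def by (rule Bochner_Integration.integral_sum[symmetric]) (use integ in blast)
  have integG: "\<And>s :: real \<Rightarrow> real. s \<in> borel_measurable borel \<Longrightarrow> (\<forall>v. s v \<in> B)
      \<Longrightarrow> integrable D (\<lambda>v. G (s v) v)"
  proof -
    fix s :: "real \<Rightarrow> real" assume sm: "s \<in> borel_measurable borel" and sB: "\<forall>v. s v \<in> B"
    show "integrable D (\<lambda>v. G (s v) v)"
      unfolding G_def by (intro Bochner_Integration.integrable_sum) (simp add: integ sm sB)
  qed
  have opt_int: "\<And>s :: real \<Rightarrow> real. s \<in> borel_measurable borel \<Longrightarrow> (\<forall>v. s v \<in> B)
      \<Longrightarrow> (\<Sum>t=1..T. U t s) \<le> (\<Sum>t=1..T. U t ss)"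
  proof -
    fix s :: "real \<Rightarrow> real" assume sm: "s \<in> borel_measurable borel" and sB: "\<forall>v. s v \<in> B"
    have "(\<integral>v. G (s v) v \<partial>D) \<le> (\<integral>v. G (ss v) v \<partial>D)"
      by (rule integral_mono[OF integG[OF sm sB] integG[OF ss_meas]]) (use ssB ss_opt sB in auto)
    then show "(\<Sum>t=1..T. U t s) \<le> (\<Sum>t=1..T. U t ss)"
      using sumU[OF sm sB] sumU[OF ss_meas] ssB by simp
  qed
  have cs_mono: "\<And>\<pi> l m. \<pi> \<in> quantile_simplex K \<Longrightarrow> 1 \<le> l \<Longrightarrow> l \<le> m \<Longrightarrow> m \<le> K+1
      \<Longrightarrow> cumsum \<pi> l \<le> cumsum \<pi> m"
    unfolding cumsum_def quantile_simplex_def by (intro sum_mono2) auto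
  have cs_le1: "\<And>\<pi> m. \<pi> \<in> quantile_simplex K \<Longrightarrow> m \<le> K+1 \<Longrightarrow> cumsum \<pi> m \<le> 1"
  proof -
    fix \<pi> m assume pi: "\<pi> \<in> quantile_simplex K" and m: "m \<le> K+1"
    have "cumsum \<pi> m \<le> (\<Sum>l=1..K+1. \<pi> l)"
      unfolding cumsum_def using pi m unfolding quantile_simplex_def by (intro sum_mono2) auto
    then show "cumsum \<pi> m \<le> 1" using pi unfolding quantile_simplex_def by simp
  qed
  have qs_B: "\<And>\<pi> v. \<pi> \<in> quantile_simplex K \<Longrightarrow> qstrat K D \<pi> v \<in> B"
  proof -
    fix \<pi> v assume pi: "\<pi> \<in> quantile_simplex K"
    have "\<forall>l m. 1 \<le> l \<longrightarrow> l \<le> m \<longrightarrow> m \<le> K+1 \<longrightarrow>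
        quantile D (cumsum \<pi> l) \<le> quantile D (cumsum \<pi> m)"
    proof (intro allI impI)
      fix l m :: nat assume "1 \<le> l" "l \<le> m" "m \<le> K+1"
      then show "quantile D (cumsum \<pi> l) \<le> quantile D (cumsum \<pi> m)"
        using quantile_mono[OF D_dist D_supp cs_mono[OF pi] cs_le1[OF pi]] by simp
    qed
    then show "qstrat K D \<pi> v \<in> B" unfolding qstrat_Eexp B_def by (rule E_in)
  qed
  define L where "L j = {v. ss v \<le> (real j - 1) / real K}" for j
  have Lsets: "\<And>j. L j \<in> sets D"
  proof -
    fix j
    have "L j = ss -` {..(real j - 1) / real K} \<inter> space borel" unfolding L_def by auto
    also have "\<dots> \<in> sets borel" by (rule measurable_sets[OF ss_meas]) simp
    finally show "L j \<in> sets D" by simp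
  qed
  have ss_nn: "\<And>v. 0 \<le> ss v" unfolding ss_def by simp
  have ss_le1: "\<And>v. ss v \<le> 1"
  proof -
    fix v
    have "real (ks v) \<le> real K" using ksK[of v] by simp
    then show "ss v \<le> 1" unfolding ss_def using K_pos by (simp add: divide_le_eq)
  qed
  have neg: "(real 0 - 1) / real K < 0" using K_pos by (simp add: divide_neg_pos)
  have L0: "L 0 = {}"
  proof (rule equals0I)
    fix v assume "v \<in> L 0"
    then have "ss v \<le> (real 0 - 1) / real K" unfolding L_def by simp
    then show False using ss_nn[of v] neg by linarith
  qed
  have one: "(real (K+1) - 1) / real K = 1" using K_pos by simp
  have LK: "L (K+1) = UNIV" unfolding L_def one using ss_le1 by blast
  have Lmono: "\<And>l m. l \<le> m \<Longrightarrow> L l \<subseteq> L m"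
  proof
    fix l m :: nat and v assume lm: "l \<le> m" and v: "v \<in> L l"
    have "(real l - 1) / real K \<le> (real m - 1) / real K" using lm by (intro divide_right_mono) auto
    then show "v \<in> L m" using v unfolding L_def by auto
  qed
  have Ldown: "\<And>j u w. w \<in> L j \<Longrightarrow> u \<le> w \<Longrightarrow> u \<in> L j"
  proof -
    fix j u w assume w: "w \<in> L j" and uw: "(u::real) \<le> w"
    have "ss u \<le> ss w" using ss_mono uw unfolding mono_def by blast
    then show "u \<in> L j" using w unfolding L_def by auto
  qed
  define Pm where "Pm j = measure D (L j)" for j
  define ps where "ps l = Pm l - Pm (l - 1)" for l
  have cs_ps: "\<And>j. cumsum ps j = Pm j"
  proof -
    fix j show "cumsum ps j = Pm j"
      by (induction j) (simp_all add: cumsum_def ps_def Pm_def L0)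
  qed
  have ps_S: "ps \<in> quantile_simplex K"
  proof -
    have "\<forall>l\<in>{1..K+1}. 0 \<le> ps l"
    proof
      fix l assume "l \<in> {1..K+1}"
      have "Pm (l - 1) \<le> Pm l" unfolding Pm_def
        by (rule finite_measure_mono[OF Lmono Lsets]) simp
      then show "0 \<le> ps l" unfolding ps_def by simp
    qed
    moreover have "(\<Sum>l=1..K+1. ps l) = 1"
    proof -
      have "(\<Sum>l=1..K+1. ps l) = cumsum ps (K+1)" unfolding cumsum_def by simp
      also have "\<dots> = Pm (K+1)" by (rule cs_ps)
      also have "\<dots> = 1" unfolding Pm_def LK using prob_space by simp
      finally show ?thesis .
    qed
    ultimately show ?thesis unfolding quantile_simplex_def by blast
  qed
  have Pm01: "\<And>j. 0 \<le> Pm j \<and> Pm j \<le> 1" unfolding Pm_def by simp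
  define a where "a j = quantile D (Pm j)" for j
  have cdfa: "\<And>j. cdf D (a j) = Pm j" unfolding a_def
    using cdf_quantile[OF D_dist D_supp D_cont] Pm01 by blast
  have fmD: "finite_measure D" by (rule finite_measureI) simp
  have AEj: "\<And>j. AE v in D. (v \<in> L j \<longleftrightarrow> v \<le> a j)"
  proof -
    fix j
    have I: "{..a j} \<in> sets D" by simp
    have mI: "measure D {..a j} = measure D (L j)" using cdfa[of j] unfolding cdf_def Pm_def .
    show "AE v in D. (v \<in> L j \<longleftrightarrow> v \<le> a j)"
    proof (cases "L j \<subseteq> {..a j}")
      case True
      have "AE v in D. (v \<in> L j \<longleftrightarrow> v \<in> {..a j})"
        by (rule AE_eq_nested[OF fmD Lsets I True mI[symmetric]])
      then show ?thesis by simp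
    next
      case False
      then obtain w where w: "w \<in> L j" "\<not> w \<le> a j" by auto
      have sub: "{..a j} \<subseteq> L j"
      proof
        fix u assume "u \<in> {..a j}"
        then have "u \<le> w" using w(2) by simp
        then show "u \<in> L j" by (rule Ldown[OF w(1)])
      qed
      have "AE v in D. (v \<in> {..a j} \<longleftrightarrow> v \<in> L j)"
        by (rule AE_eq_nested[OF fmD I Lsets sub mI])
      then show ?thesis by (rule eventually_mono) auto
    qed
  qed
  have AEall: "AE v in D. \<forall>j\<in>{1..K+1}. (v \<in> L j \<longleftrightarrow> v \<le> a j)"
    by (rule eventually_ball_finite) (simp_all add: AEj)
  have qs_eq: "AE v in D. qstrat K D ps v = ss v"
    using AEall
  proof (rule eventually_mono)
    fix v assume h: "\<forall>j\<in>{1..K+1}. (v \<in> L j \<longleftrightarrow> v \<le> a j)"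
    have h2: "\<forall>j\<in>{1..K+1}. (v \<le> quantile D (cumsum ps j) \<longleftrightarrow> ks v + 1 \<le> j)"
    proof
      fix j assume j: "j \<in> {1..K+1}"
      have "v \<le> quantile D (cumsum ps j) \<longleftrightarrow> v \<le> a j" by (simp add: cs_ps a_def)
      also have "\<dots> \<longleftrightarrow> v \<in> L j" using h j by blast
      also have "\<dots> \<longleftrightarrow> ss v \<le> (real j - 1) / real K" by (simp add: L_def)
      also have "\<dots> \<longleftrightarrow> real (ks v) \<le> real j - 1" unfolding ss_def using K_pos
        by (simp add: divide_le_cancel)
      also have "real j - 1 = real (j - 1)" using j by auto
      also have "real (ks v) \<le> real (j - 1) \<longleftrightarrow> ks v \<le> j - 1" by simp
      also have "\<dots> \<longleftrightarrow> ks v + 1 \<le> j" using j by auto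
      finally show "v \<le> quantile D (cumsum ps j) \<longleftrightarrow> ks v + 1 \<le> j" .
    qed
    have "Eexp K (\<lambda>j. quantile D (cumsum ps j)) v = real (ks v) / real K"
      by (rule E_val[OF ksK h2])
    then show "qstrat K D ps v = ss v" by (simp add: qstrat_Eexp ss_def)
  qed
  have Ueqq: "\<And>t. U t (qstrat K D ps) = U t ss"
  proof -
    fix t
    have m1: "(\<lambda>v. f t (qstrat K D ps v) v) \<in> borel_measurable D"
      unfolding measD by (rule meas_comp[OF qstrat_meas _ finB fmeas]) (use qs_B[OF ps_S] in blast)
    have m2: "(\<lambda>v. f t (ss v) v) \<in> borel_measurable D"
      unfolding measD by (rule meas_comp[OF ss_meas _ finB fmeas]) (use ssB in blast)
    have "AE v in D. f t (qstrat K D ps v) v = f t (ss v) v"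
      using qs_eq by (rule eventually_mono) simp
    then show "U t (qstrat K D ps) = U t ss" unfolding Ueq by (rule integral_cong_AE[OF m1 m2])
  qed
  define C where "C = (\<Sum>t=1..T. U t (qstrat K D (\<pi>t t)))"
  have dsum: "\<And>s :: real \<Rightarrow> real. (\<Sum>t=1..T. U t s - U t (qstrat K D (\<pi>t t))) = (\<Sum>t=1..T. U t s) - C"
    by (simp add: C_def sum_subtractf)
  have ssS: "ss \<in> strategies K" unfolding strategies_def using ss_meas ssB unfolding B_def by blast
  show ?thesis unfolding Udef dsum
  proof (intro exI[of _ "(\<Sum>t=1..T. U t ss) - C"] conjI)
    show "\<exists>s\<in>strategies K. (\<Sum>t = 1..T. U t s) - C = (\<Sum>t = 1..T. U t ss) - C"
      using ssS by blast
    show "\<forall>s\<in>strategies K. (\<Sum>t = 1..T. U t s) - C \<le> (\<Sum>t = 1..T. U t ss) - C"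
    proof
      fix s assume "s \<in> strategies K"
      then have sm: "s \<in> borel_measurable borel" and sB: "\<forall>v. s v \<in> B"
        unfolding strategies_def B_def by auto
      show "(\<Sum>t = 1..T. U t s) - C \<le> (\<Sum>t = 1..T. U t ss) - C" using opt_int[OF sm sB] by simp
    qed
    show "\<exists>\<pi>\<in>quantile_simplex K. (\<Sum>t = 1..T. U t (qstrat K D \<pi>)) - C = (\<Sum>t = 1..T. U t ss) - C"
    proof (rule bexI[OF _ ps_S])
      show "(\<Sum>t = 1..T. U t (qstrat K D ps)) - C = (\<Sum>t = 1..T. U t ss) - C"
        using Ueqq by simp
    qed
    show "\<forall>\<pi>\<in>quantile_simplex K. (\<Sum>t = 1..T. U t (qstrat K D \<pi>)) - C \<le> (\<Sum>t = 1..T. U t ss) - C"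
    proof
      fix \<pi> assume pi: "\<pi> \<in> quantile_simplex K"
      have "\<forall>v. qstrat K D \<pi> v \<in> B" using qs_B[OF pi] by blast
      then show "(\<Sum>t = 1..T. U t (qstrat K D \<pi>)) - C \<le> (\<Sum>t = 1..T. U t ss) - C"
        using opt_int[OF qstrat_meas] by simp
    qed
  qed
qed

end
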